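(* Fix $x_0\in\mathbb{R}^{n_x}$. There exist a finite positive constant $\alpha_1'(x_0)$ and, for each $i\in\{2,\dots,T+1\}$, a finite set $\mathcal{K}_i'$ of sequences of non-negative integers of length $i-1$ and finite positive constants $\alpha_i'^{(j_1,\dots,j_{i-1})}(x_0)$ (depending on $x_0$ and $(j_1,\dots,j_{i-1})$ but not on the observations or the control) such that for every $u\in U$ and every $(y_1,\dots,y_T)$, the trajectory $x$ of the hybrid system starting at $x_0$ satisfies: $|c(x_1(t),u(t))|\le\alpha_1'(x_0)$ for all $t\in[0,1]$; for all $i\in\{2,\dots,T\}$ and $t\in[i-1,i]$, $$|c(x_i(t),u(t))|\le\sum_{(j_1,\dots,j_{i-1})\in\mathcal{K}_i'}\alpha_i'^{(j_1,\dots,j_{i-1})}(x_0)\prod_{m=1}^{i-1}\|y_m\|_2^{j_m};$$ and $$|h(x(T))|\le\sum_{(j_1,\dots,j_T)\in\mathcal{K}_{T+1}'}\alpha_{T+1}'^{(j_1,\dots,j_T)}(x_0)\prod_{m=1}^{T}\|y_m\|_2^{j_m}.$$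
   Context: Fix positive integers $T,m,n_x,n_y$ and $\rho_{\max}\in(0,\infty)$; $B(0,\rho_{\max})$ is the closed Euclidean ball of radius $\rho_{\max}$ in $\mathbb{R}^m$; $U$ is the set of piecewise continuous $u:[0,T]\to\mathbb{R}^m$ with $\|u(t)\|_2\le\rho_{\max}$ for all $t$. $f:\mathbb{R}^{n_x}\times\mathbb{R}^m\to\mathbb{R}^{n_x}$ is continuously differentiable and there is $K_1\in[1,\infty)$ with $\|f(x',u')-f(x'',u'')\|_2\le K_1(\|x'-x''\|_2+\|u'-u''\|_2)$ for all $x',x''$ and $u',u''\in B(0,\rho_{\max})$. $g:\mathbb{R}^{n_x}\times\mathbb{R}^{n_y}\to\mathbb{R}^{n_x}$ is continuous and differentiable in its first argument, and there are $K_2,\dots,K_5\ge0$ and positive integers $L_1,L_2$ such that for all $x,y$ both $\|g(x,y)\|_2$ and $\|\frac{\partial}{\partial x}g(x,y)\|_2$ are at most $K_2+K_3\|x\|_2^{L_1}+K_4\|y\|_2^{L_2}+K_5\|x\|_2^{L_1}\|y\|_2^{L_2}$. The hybrid system: $x_1$ on $[0,1]$ solves $\dot x_1=f(x_1,u)$, $x_1(0)=x_0$; for $i=2,\dots,T$, $x_i$ on $[i-1,i]$ solves $\dot x_i=f(x_i,u)$ with $x_i(i-1)=g(x_{i-1}(i-1),y_{i-1})$; $x(t)=x_i(t)$ for $t\in[i-1,i)$, and $x(T)=g(x_T(T),y_T)$. Costs: $c:\mathbb{R}^{n_x}\times\mathbb{R}^m\to\mathbb{R}$ is continuous and continuously differentiable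 in $x$, $h:\mathbb{R}^{n_x}\to\mathbb{R}$ is differentiable, and there are $K_6,K_7\ge0$ and a positive integer $L_3$ such that $|c(x,u)|$, $\|\frac{\partial}{\partial x}c(x,u)\|_2$, $|h(x)|$, $\|\frac{\partial}{\partial x}h(x)\|_2$ are all at most $K_6+K_7\|x\|_2^{L_3}$ for all $x$ and $u\in B(0,\rho_{\max})$. *)

theory Defs
  imports "HOL-Analysis.Analysis"
begin

definition piecewise_continuous_on :: "real \<Rightarrow> real \<Rightarrow> (real \<Rightarrow> 'a::real_normed_vector) \<Rightarrow> bool" where
  "piecewise_continuous_on a b u \<longleftrightarrow>
     (\<exists>S. finite S \<and> S \<subseteq> {a..b} \<and>
        (\<forall>t\<in>{a..b} - S. continuous (at t within {a..b}) u) \<and>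
        (\<forall>s\<in>S. (s > a \<longrightarrow> (\<exists>l. (u \<longlongrightarrow> l) (at_left s))) \<and>
                 (s < b \<longrightarrow> (\<exists>l. (u \<longlongrightarrow> l) (at_right s)))))"

definition admissible_controls :: "nat \<Rightarrow> real \<Rightarrow> (real \<Rightarrow> 'u::real_normed_vector) set" where
  "admissible_controls T \<rho> =
     {u. piecewise_continuous_on 0 (real T) u \<and> (\<forall>t\<in>{0..real T}. norm (u t) \<le> \<rho>)}"

definition hybrid_init :: "('x \<Rightarrow> 'y \<Rightarrow> 'x) \<Rightarrow> 'x \<Rightarrow> (nat \<Rightarrow> 'y) \<Rightarrow> (nat \<Rightarrow> real \<Rightarrow> 'x) \<Rightarrow> nat \<Rightarrow> 'x" where
  "hybrid_init g x0 y xs i =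
     (if i = 1 then x0 else g (xs (i - 1) (real (i - 1))) (y (i - 1)))"

text \<open>xs i is the i-th arc x_i on [i-1,i], a (Caratheodory) solution of
  dx_i/dt = f(x_i,u) with the hybrid initial conditions, i = 1..T.\<close>
definition hybrid_trajectory ::
  "('x::euclidean_space \<Rightarrow> 'u::euclidean_space \<Rightarrow> 'x) \<Rightarrow> ('x \<Rightarrow> 'y \<Rightarrow> 'x) \<Rightarrow> nat \<Rightarrow> 'x
     \<Rightarrow> (real \<Rightarrow> 'u) \<Rightarrow> (nat \<Rightarrow> 'y) \<Rightarrow> (nat \<Rightarrow> real \<Rightarrow> 'x) \<Rightarrow> bool" where
  "hybrid_trajectory f g T x0 u y xs \<longleftrightarrow>
     (\<forall>i\<in>{1..T}. continuous_on {real i - 1..real i} (xs i) \<and>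
        (\<forall>t\<in>{real i - 1..real i}.
           ((\<lambda>s. f (xs i s) (u s)) has_integral (xs i t - hybrid_init g x0 y xs i)) {real i - 1..t}))"

end

theory Submission imports Defs begin

lemma gronwall:
  fixes \<phi> :: "real \<Rightarrow> real"
  assumes cont: "continuous_on {a..b} \<phi>" and K: "K \<ge> 0"
    and le: "\<And>t. t \<in> {a..b} \<Longrightarrow> \<phi> t \<le> c + K * integral {a..t} \<phi>"
    and t: "t \<in> {a..b}"
  shows "\<phi> t \<le> c * exp (K * (t - a))"
proof -
  define w where "w s = exp (- (K * (s - a))) * (c + K * integral {a..s} \<phi>)" for s
  define w' where "w' s = exp (- (K * (s - a))) * (K * \<phi> s) - K * exp (- (K * (s - a))) * (c + K * integral {a..s} \<phi>)" for s
  have der: "(w has_real_derivative w' s) (at s within {a..t})" if "s \<in> {a..t}" for s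
  proof -
    have s: "s \<in> {a..b}" using that t by auto
    have "((\<lambda>x. integral {a..x} \<phi>) has_real_derivative \<phi> s) (at s within {a..b})"
      by (rule integral_has_real_derivative[OF cont s])
    then have d1: "((\<lambda>x. integral {a..x} \<phi>) has_real_derivative \<phi> s) (at s within {a..t})"
      by (rule DERIV_subset) (use t in auto)
    have "((\<lambda>x. exp (- (K * (x - a)))) has_real_derivative exp (- (K * (s - a))) * (- (K * 1))) (at s within {a..t})"
      by (auto intro!: derivative_eq_intros)
    from DERIV_mult[OF this DERIV_add[OF DERIV_const[of c] DERIV_cmult[OF d1, of K]]]
    show ?thesis unfolding w_def w'_def by (simp add: algebra_simps)
  qed
  have w'np: "w' s \<le> 0" if "s \<in> {a..t}" for s
  proof -
    have "\<phi> s \<le> c + K * integral {a..s} \<phi>" using le[of s] that t by auto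
    then have "K * \<phi> s \<le> K * (c + K * integral {a..s} \<phi>)" using K by (rule mult_left_mono)
    then show ?thesis unfolding w'_def
      by (smt (verit) exp_gt_zero mult_left_mono mult.assoc mult.commute)
  qed
  have "w t \<le> w a"
  proof (cases "a < t")
    case True
    from mvt_simple[OF True, of w "\<lambda>s h. h * w' s"] der
    obtain x where "x \<in> {a<..<t}" "w t - w a = (t - a) * w' x"
      by (auto simp: has_real_derivative_iff_has_vector_derivative has_vector_derivative_def mult.commute)
    moreover have "w' x \<le> 0" using w'np \<open>x \<in> {a<..<t}\<close> by auto
    ultimately show ?thesis using True by (smt (verit) mult_nonneg_nonpos)
  next
    case False then have "t = a" using t by auto
    then show ?thesis by simp
  qed
  also have "w a = c" unfolding w_def by simp
  finally have "exp (- (K * (t - a))) * (c + K * integral {a..t} \<phi>) \<le> c" unfolding w_def .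
  then have "c + K * integral {a..t} \<phi> \<le> c * exp (K * (t - a))"
  proof -
    let ?X = "c + K * integral {a..t} \<phi>" and ?z = "K * (t - a)"
    have "?X = exp ?z * (exp (- ?z) * ?X)" by (simp add: exp_minus_inverse mult.assoc[symmetric])
    also have "\<dots> \<le> exp ?z * c" by (rule mult_left_mono) (use \<open>exp (- ?z) * ?X \<le> c\<close> in auto)
    finally show ?thesis by (simp add: mult.commute)
  qed
  then show ?thesis using le[OF t] by linarith
qed


lemma arc_bound:
  fixes f :: "'x::euclidean_space \<Rightarrow> 'u::euclidean_space \<Rightarrow> 'x"
  assumes f_lip: "\<And>x' x'' u' u''. norm u' \<le> \<rho> \<Longrightarrow> norm u'' \<le> \<rho> \<Longrightarrow>
                 norm (f x' u' - f x'' u'') \<le> K1 * (norm (x' - x'') + norm (u' - u''))"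
    and K1: "K1 \<ge> 0" and rho: "\<rho> \<ge> 0"
    and u: "u \<in> admissible_controls T \<rho>"
    and tr: "hybrid_trajectory f g T x0 u y xs"
    and i: "i \<in> {1..T}" and t: "t \<in> {real i - 1..real i}"
  shows "norm (xs i t) \<le> (norm (hybrid_init g x0 y xs i) + (norm (f 0 0) + K1 * \<rho>)) * exp K1"
proof -
  define a where "a = real i - 1"
  define b where "b = real i"
  define x where "x = xs i"
  define z where "z = hybrid_init g x0 y xs i"
  define A where "A = norm (f 0 0) + K1 * \<rho>"
  define F where "F s = f (x s) (u s)" for s
  define \<phi> where "\<phi> s = norm (x s)" for s
  have cont: "continuous_on {a..b} x" and hint: "\<And>t. t \<in> {a..b} \<Longrightarrow> (F has_integral (x t - z)) {a..t}"
    using tr i unfolding hybrid_trajectory_def a_def b_def x_def z_def F_def by auto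
  have contphi: "continuous_on {a..b} \<phi>" unfolding \<phi>_def using cont by (intro continuous_intros)
  have fb: "norm (F s) \<le> A + K1 * \<phi> s" if "s \<in> {a..b}" for s
  proof -
    have "s \<in> {0..real T}" using that i unfolding a_def b_def by auto
    then have us: "norm (u s) \<le> \<rho>" using u unfolding admissible_controls_def by auto
    have "norm (f (x s) (u s) - f 0 0) \<le> K1 * (norm (x s - 0) + norm (u s - 0))"
      by (rule f_lip[OF us]) (use rho in simp)
    then have "norm (F s) \<le> norm (f 0 0) + K1 * (norm (x s) + norm (u s))"
      unfolding F_def by (smt (verit) norm_triangle_ineq2 diff_zero)
    also have "\<dots> \<le> norm (f 0 0) + K1 * (norm (x s) + \<rho>)"
      using us K1 by (simp add: mult_left_mono)
    finally show ?thesis unfolding A_def \<phi>_def by (simp add: algebra_simps)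
  qed
  have main: "\<phi> s \<le> (norm z + A) + K1 * integral {a..s} \<phi>" if s: "s \<in> {a..b}" for s
  proof -
    have sub: "{a..s} \<subseteq> {a..b}" using s by auto
    have hs: "(F has_integral (x s - z)) {a..s}" using hint[OF s] .
    have ci: "continuous_on {a..s} \<phi>" using continuous_on_subset[OF contphi sub] .
    have gi: "((\<lambda>r. A + K1 * \<phi> r) has_integral (A * (s - a) + K1 * integral {a..s} \<phi>)) {a..s}"
      using s by (intro has_integral_add has_integral_mult_right integrable_integral
           integrable_continuous_interval ci) (use has_integral_const_real[of A a s] in \<open>auto simp: mult.commute\<close>)
    have "norm (integral {a..s} F) \<le> integral {a..s} (\<lambda>r. A + K1 * \<phi> r)"
      using hs gi fb sub by (intro integral_norm_bound_integral) (auto simp: has_integral_integrable)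
    also have "\<dots> = A * (s - a) + K1 * integral {a..s} \<phi>" using gi by (rule integral_unique)
    finally have I: "norm (x s - z) \<le> A * (s - a) + K1 * integral {a..s} \<phi>"
      using integral_unique[OF hs] by simp
    have "A \<ge> 0" unfolding A_def using K1 rho by simp
    then have "A * (s - a) \<le> A" using s unfolding a_def b_def by (simp add: mult_left_le)
    moreover have "\<phi> s \<le> norm z + norm (x s - z)" unfolding \<phi>_def by (metis norm_triangle_sub add.commute)
    ultimately show ?thesis using I by linarith
  qed
  have t': "t \<in> {a..b}" using t unfolding a_def b_def .
  have "\<phi> t \<le> (norm z + A) * exp (K1 * (t - a))"
    by (rule gronwall[OF contphi K1 main t'])
  also have "\<dots> \<le> (norm z + A) * exp K1"
  proof (rule mult_left_mono)
    show "exp (K1 * (t - a)) \<le> exp K1" using t' K1 unfolding a_def b_def by (simp add: mult_left_le)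
    show "0 \<le> norm z + A" unfolding A_def using K1 rho by simp
  qed
  finally show ?thesis unfolding \<phi>_def x_def z_def A_def .
qed


definition Kset :: "nat \<Rightarrow> nat \<Rightarrow> nat list set" where
  "Kset n P = insert (replicate n 0) ((\<lambda>m. (replicate n 0)[m - 1 := P]) ` {1..n})"

lemma Kset_props: "finite (Kset n P)" "js \<in> Kset n P \<Longrightarrow> length js = n"
  unfolding Kset_def by auto

lemma conv:
  fixes r :: "nat \<Rightarrow> real"
  assumes B: "B > 0" and r: "\<And>m. r m \<ge> 0"
  shows "B * (1 + (\<Sum>m=1..n. r m)) ^ P \<le>
     (\<Sum>js\<in>Kset n P. (B * (real n + 1) ^ P) * (\<Prod>m=1..n. r m ^ (js ! (m - 1))))"
proof -
  define M where "M = Max (insert 1 (r ` {1..n}))"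
  have M1: "1 \<le> M" unfolding M_def by simp
  have Mr: "r m \<le> M" if "m \<in> {1..n}" for m unfolding M_def using that by (intro Max_ge) auto
  have "(\<Sum>m=1..n. r m) \<le> (\<Sum>m=1..n. M)" using Mr by (rule sum_mono)
  then have "1 + (\<Sum>m=1..n. r m) \<le> (real n + 1) * M" using M1 by (simp add: algebra_simps)
  then have Rle: "(1 + (\<Sum>m=1..n. r m)) ^ P \<le> ((real n + 1) * M) ^ P"
    by (intro power_mono) (use r sum_nonneg[of "{1..n}" r] in auto)
  define trm where "trm js = (B * (real n + 1) ^ P) * (\<Prod>m=1..n. r m ^ (js ! (m - 1)))" for js
  have tnn: "trm js \<ge> 0" for js unfolding trm_def using B r by (intro mult_nonneg_nonneg prod_nonneg) auto
  have "\<exists>js\<in>Kset n P. M ^ P \<le> (\<Prod>m=1..n. r m ^ (js ! (m - 1)))"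
  proof -
    have "M \<in> insert 1 (r ` {1..n})" unfolding M_def by (intro Max_in) auto
    then show ?thesis
    proof
      assume "M = 1"
      have "(\<Prod>m=1..n. r m ^ (replicate n 0 ! (m - 1))) = (\<Prod>m=1..n. 1)"
        by (intro prod.cong) auto
      then show ?thesis using \<open>M = 1\<close> by (intro bexI[of _ "replicate n 0"]) (auto simp: Kset_def)
    next
      assume "M \<in> r ` {1..n}"
      then obtain m0 where m0: "m0 \<in> {1..n}" "M = r m0" by auto
      have "(\<Prod>m=1..n. r m ^ ((replicate n 0)[m0 - 1 := P] ! (m - 1)))
            = (\<Prod>m=1..n. if m = m0 then r m0 ^ P else 1)"
        using m0 by (intro prod.cong) (auto simp: nth_list_update)
      also have "\<dots> = r m0 ^ P" using m0 by (simp add: prod.delta)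
      finally show ?thesis using m0 by (intro bexI[of _ "(replicate n 0)[m0 - 1 := P]"]) (auto simp: Kset_def)
    qed
  qed
  then obtain js where js: "js \<in> Kset n P" "M ^ P \<le> (\<Prod>m=1..n. r m ^ (js ! (m - 1)))" by blast
  have "B * (1 + (\<Sum>m=1..n. r m)) ^ P \<le> B * ((real n + 1) ^ P * M ^ P)"
    using Rle B by (simp add: power_mult_distrib)
  also have "\<dots> \<le> trm js" unfolding trm_def using js(2) B
    by (simp add: mult_left_mono mult.assoc)
  also have "\<dots> \<le> (\<Sum>js\<in>Kset n P. trm js)"
    by (rule member_le_sum) (use js tnn Kset_props in auto)
  finally show ?thesis unfolding trm_def .
qed

lemma g_step:
  fixes K2 K3 K4 K5 :: real
  assumes "K2 \<ge> 0" "K3 \<ge> 0" "K4 \<ge> 0" "K5 \<ge> 0" "0 \<le> a" "a \<le> X" "0 \<le> b" "b \<le> Y" "1 \<le> X" "1 \<le> Y"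
  shows "K2 + K3 * a ^ L1 + K4 * b ^ L2 + K5 * a ^ L1 * b ^ L2 \<le> (K2 + K3 + K4 + K5) * X ^ L1 * Y ^ L2"
proof -
  have p1: "a ^ L1 \<le> X ^ L1" "b ^ L2 \<le> Y ^ L2" using assms by (auto intro: power_mono)
  have p2: "1 \<le> X ^ L1" "1 \<le> Y ^ L2" using assms by auto
  have q: "1 \<le> X ^ L1 * Y ^ L2" "X ^ L1 \<le> X ^ L1 * Y ^ L2" "Y ^ L2 \<le> X ^ L1 * Y ^ L2"
    using p2 mult_mono[OF p2(1) p2(2)] mult_left_mono[OF p2(2), of "X ^ L1"] mult_right_mono[OF p2(1), of "Y ^ L2"] by auto
  have "a ^ L1 * b ^ L2 \<le> X ^ L1 * Y ^ L2" using p1 assms by (intro mult_mono) auto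
  then have "K2 * 1 + K3 * a ^ L1 + K4 * b ^ L2 + K5 * (a ^ L1 * b ^ L2) \<le>
       K2 * (X ^ L1 * Y ^ L2) + K3 * (X ^ L1 * Y ^ L2) + K4 * (X ^ L1 * Y ^ L2) + K5 * (X ^ L1 * Y ^ L2)"
    using q p1 assms by (intro add_mono mult_left_mono order_trans[OF p1(1) q(2)] order_trans[OF p1(2) q(3)]) auto
  then show ?thesis by (simp add: algebra_simps)
qed

lemma poly_step:
  fixes K6 K7 :: real
  assumes "K6 \<ge> 0" "K7 \<ge> 0" "0 \<le> \<nu>" "\<nu> \<le> Z * Rp" "Z \<ge> 0" "Rp \<ge> 1"
  shows "K6 + K7 * \<nu> ^ L3 \<le> (K6 + K7 * Z ^ L3 + 1) * Rp ^ L3"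
proof -
  have "\<nu> ^ L3 \<le> (Z * Rp) ^ L3" using assms by (intro power_mono) auto
  then have "K7 * \<nu> ^ L3 \<le> K7 * Z ^ L3 * Rp ^ L3" using assms by (simp add: mult_left_mono power_mult_distrib mult.assoc)
  moreover have "1 \<le> Rp ^ L3" using assms by auto
  ultimately have "K6 * 1 + K7 * \<nu> ^ L3 + 0 \<le> K6 * Rp ^ L3 + K7 * Z ^ L3 * Rp ^ L3 + 1 * Rp ^ L3"
    using assms by (intro add_mono mult_left_mono) auto
  then show ?thesis by (simp add: algebra_simps)
qed


lemma init_bound:
  fixes f :: "'x::euclidean_space \<Rightarrow> 'u::euclidean_space \<Rightarrow> 'x"
    and g :: "'x \<Rightarrow> 'y::euclidean_space \<Rightarrow> 'x"
  assumes f_lip: "\<And>x' x'' u' u''. norm u' \<le> \<rho> \<Longrightarrow> norm u'' \<le> \<rho> \<Longrightarrow>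
                 norm (f x' u' - f x'' u'') \<le> K1 * (norm (x' - x'') + norm (u' - u''))"
    and K1: "K1 \<ge> 0" and rho: "\<rho> \<ge> 0"
    and K2345: "K2 \<ge> 0" "K3 \<ge> 0" "K4 \<ge> 0" "K5 \<ge> 0"
    and gb: "\<And>x w. norm (g x w) \<le> K2 + K3 * norm x ^ L1 + K4 * norm w ^ L2 + K5 * norm x ^ L1 * norm w ^ L2"
  shows "\<exists>C D. C \<ge> 0 \<and> (\<forall>u\<in>admissible_controls T \<rho>. \<forall>y xs. hybrid_trajectory f g T x0 u y xs \<longrightarrow>
            i \<in> {1..T+1} \<longrightarrow> norm (hybrid_init g x0 y xs i) \<le> C * (1 + (\<Sum>m=1..i-1. norm (y m))) ^ D)"
proof (induction i)
  case 0
  show ?case by (intro exI[of _ 0]) auto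
next
  case (Suc i)
  show ?case
  proof (cases "i = 0")
    case True
    then show ?thesis by (intro exI[of _ "norm x0"] exI[of _ 0]) (auto simp: hybrid_init_def)
  next
    case False
    from Suc.IH obtain C D where C: "C \<ge> 0" and IH: "\<And>u y xs. u \<in> admissible_controls T \<rho> \<Longrightarrow>
        hybrid_trajectory f g T x0 u y xs \<Longrightarrow> i \<in> {1..T+1} \<Longrightarrow>
        norm (hybrid_init g x0 y xs i) \<le> C * (1 + (\<Sum>m=1..i-1. norm (y m))) ^ D" by blast
    define A where "A = norm (f 0 0) + K1 * \<rho>"
    define Z where "Z = exp K1 * (C + A)"
    have A: "A \<ge> 0" unfolding A_def using K1 rho by simp
    have Z: "Z \<ge> 0" unfolding Z_def using A C by simp
    show ?thesis
    proof (intro exI[of _ "(K2 + K3 + K4 + K5) * (1 + Z) ^ L1"] exI[of _ "D * L1 + L2"] conjI ballI allI impI)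
      show "0 \<le> (K2 + K3 + K4 + K5) * (1 + Z) ^ L1" using K2345 Z by simp
      fix u y xs
      assume u: "u \<in> admissible_controls T \<rho>" and tr: "hybrid_trajectory f g T x0 u y xs"
        and si: "Suc i \<in> {1..T+1}"
      have i: "i \<in> {1..T}" using si False by auto
      define R where "R = 1 + (\<Sum>m=1..i-1. norm (y m))"
      define R' where "R' = 1 + (\<Sum>m=1..Suc i-1. norm (y m))"
      have R1: "R \<ge> 1" unfolding R_def by (simp add: sum_nonneg)
      have RR': "R' = R + norm (y i)"
      proof -
        obtain k where k: "i = Suc k" using False by (cases i) auto
        show ?thesis unfolding R_def R'_def k by (simp add: sum.cl_ivl_Suc)
      qed
      have RR: "R \<le> R'" "norm (y i) \<le> R'" "1 \<le> R'" using RR' R1 norm_ge_zero[of "y i"] by linarith+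
      have ib: "norm (hybrid_init g x0 y xs i) \<le> C * R ^ D" using IH[OF u tr] i unfolding R_def by auto
      have RD: "1 \<le> R ^ D" using R1 by simp
      have "norm (xs i (real i)) \<le> (norm (hybrid_init g x0 y xs i) + A) * exp K1"
        unfolding A_def by (rule arc_bound[OF f_lip K1 rho u tr i]) auto
      also have "\<dots> \<le> (C * R ^ D + A * R ^ D) * exp K1"
        using ib A RD mult_left_mono[OF RD A] by (intro mult_right_mono add_mono) auto
      also have "\<dots> = Z * R ^ D" unfolding Z_def by (simp add: algebra_simps)
      finally have xb: "norm (xs i (real i)) \<le> Z * R ^ D" .
      define X where "X = (1 + Z) * R ^ D"
      have X1: "1 \<le> X" unfolding X_def using RD Z mult_mono[OF _ RD, of 1 "1+Z"] by simp
      have X: "norm (xs i (real i)) \<le> X" "1 \<le> X" using X1 xb RD Z unfolding X_def by (auto simp: algebra_simps)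
      have "hybrid_init g x0 y xs (Suc i) = g (xs i (real i)) (y i)" unfolding hybrid_init_def using False by simp
      then have "norm (hybrid_init g x0 y xs (Suc i)) \<le> (K2 + K3 + K4 + K5) * X ^ L1 * R' ^ L2"
        using gb[of "xs i (real i)" "y i"] g_step[OF K2345 _ X(1) _ RR(2) X(2) RR(3), of L1 L2] by simp
      also have "\<dots> \<le> (K2 + K3 + K4 + K5) * ((1 + Z) ^ L1 * R' ^ (D * L1)) * R' ^ L2"
      proof -
        have "R ^ (D * L1) \<le> R' ^ (D * L1)" using RR R1 by (intro power_mono) auto
        then have "X ^ L1 \<le> (1 + Z) ^ L1 * R' ^ (D * L1)" unfolding X_def using Z
          by (simp add: power_mult_distrib power_mult[symmetric] mult_left_mono)
        then show ?thesis using K2345 RR by (intro mult_right_mono mult_left_mono) auto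
      qed
      also have "\<dots> = (K2 + K3 + K4 + K5) * (1 + Z) ^ L1 * R' ^ (D * L1 + L2)"
        by (simp add: power_add algebra_simps)
      finally show "norm (hybrid_init g x0 y xs (Suc i)) \<le> (K2 + K3 + K4 + K5) * (1 + Z) ^ L1 *
          (1 + (\<Sum>m=1..Suc i-1. norm (y m))) ^ (D * L1 + L2)" unfolding R'_def .
    qed
  qed
qed

theorem proposition7:
  fixes f :: "'x::euclidean_space \<Rightarrow> 'u::euclidean_space \<Rightarrow> 'x"
    and g :: "'x \<Rightarrow> 'y::euclidean_space \<Rightarrow> 'x"
    and c :: "'x \<Rightarrow> 'u \<Rightarrow> real"
    and h :: "'x \<Rightarrow> real"
    and T :: nat and \<rho> :: real and x0 :: 'x
    and K1 K2 K3 K4 K5 K6 K7 :: real and L1 L2 L3 :: nat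
  assumes T_pos: "T \<ge> 1"
    and rho_pos: "\<rho> > 0"
    and f_C1: "\<exists>F'. (\<forall>z. ((\<lambda>(x, v). f x v) has_derivative blinfun_apply (F' z)) (at z))
                     \<and> continuous_on UNIV F'"
    and K1: "K1 \<ge> 1"
    and f_lip: "\<And>x' x'' u' u''. norm u' \<le> \<rho> \<Longrightarrow> norm u'' \<le> \<rho> \<Longrightarrow>
                 norm (f x' u' - f x'' u'') \<le> K1 * (norm (x' - x'') + norm (u' - u''))"
    and g_cont: "continuous_on UNIV (\<lambda>(x, y). g x y)"
    and K2345: "K2 \<ge> 0" "K3 \<ge> 0" "K4 \<ge> 0" "K5 \<ge> 0"
    and L12: "L1 \<ge> 1" "L2 \<ge> 1"
    and g_bound: "\<exists>G. \<forall>x y. ((\<lambda>x. g x y) has_derivative blinfun_apply (G x y)) (at x)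
        \<and> norm (g x y) \<le> K2 + K3 * norm x ^ L1 + K4 * norm y ^ L2 + K5 * norm x ^ L1 * norm y ^ L2
        \<and> norm (G x y) \<le> K2 + K3 * norm x ^ L1 + K4 * norm y ^ L2 + K5 * norm x ^ L1 * norm y ^ L2"
    and c_cont: "continuous_on UNIV (\<lambda>(x, v). c x v)"
    and c_C1: "\<exists>C. \<forall>v. (\<forall>x. ((\<lambda>x. c x v) has_derivative blinfun_apply (C x v)) (at x))
                      \<and> continuous_on UNIV (\<lambda>x. C x v)"
    and h_diff: "\<exists>H. \<forall>x. (h has_derivative blinfun_apply (H x)) (at x)
                      \<and> norm (H x) \<le> K6 + K7 * norm x ^ L3"
    and K67: "K6 \<ge> 0" "K7 \<ge> 0" and L3: "L3 \<ge> 1"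
    and c_bound: "\<exists>C. \<forall>x v. norm v \<le> \<rho> \<longrightarrow>
        ((\<lambda>x. c x v) has_derivative blinfun_apply (C x v)) (at x)
        \<and> \<bar>c x v\<bar> \<le> K6 + K7 * norm x ^ L3 \<and> norm (C x v) \<le> K6 + K7 * norm x ^ L3"
    and h_bound: "\<And>x. \<bar>h x\<bar> \<le> K6 + K7 * norm x ^ L3"
  shows "\<exists>(\<alpha>1::real) (K :: nat \<Rightarrow> nat list set) (\<alpha> :: nat \<Rightarrow> nat list \<Rightarrow> real).
     \<alpha>1 > 0 \<and>
     (\<forall>i\<in>{2..T+1}. finite (K i) \<and> (\<forall>js\<in>K i. length js = i - 1 \<and> \<alpha> i js > 0)) \<and>
     (\<forall>u \<in> admissible_controls T \<rho>. \<forall>(y :: nat \<Rightarrow> 'y) (xs :: nat \<Rightarrow> real \<Rightarrow> 'x).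
        hybrid_trajectory f g T x0 u y xs \<longrightarrow>
          (\<forall>t\<in>{0..1}. \<bar>c (xs 1 t) (u t)\<bar> \<le> \<alpha>1) \<and>
          (\<forall>i\<in>{2..T}. \<forall>t\<in>{real i - 1..real i}.
             \<bar>c (xs i t) (u t)\<bar> \<le>
               (\<Sum>js\<in>K i. \<alpha> i js * (\<Prod>m=1..i-1. norm (y m) ^ (js ! (m - 1))))) \<and>
          \<bar>h (g (xs T (real T)) (y T))\<bar> \<le>
               (\<Sum>js\<in>K (T+1). \<alpha> (T+1) js * (\<Prod>m=1..T. norm (y m) ^ (js ! (m - 1)))))"
proof -
  have K1': "K1 \<ge> 0" using K1 by simp
  have rho': "\<rho> \<ge> 0" using rho_pos by simp
  obtain G where "\<forall>x y. ((\<lambda>x. g x y) has_derivative blinfun_apply (G x y)) (at x)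
        \<and> norm (g x y) \<le> K2 + K3 * norm x ^ L1 + K4 * norm y ^ L2 + K5 * norm x ^ L1 * norm y ^ L2
        \<and> norm (G x y) \<le> K2 + K3 * norm x ^ L1 + K4 * norm y ^ L2 + K5 * norm x ^ L1 * norm y ^ L2"
    using g_bound by blast
  then have gb: "\<And>x w. norm (g x w) \<le> K2 + K3 * norm x ^ L1 + K4 * norm w ^ L2 + K5 * norm x ^ L1 * norm w ^ L2"
    by blast
  obtain Cc where "\<forall>x v. norm v \<le> \<rho> \<longrightarrow>
        ((\<lambda>x. c x v) has_derivative blinfun_apply (Cc x v)) (at x)
        \<and> \<bar>c x v\<bar> \<le> K6 + K7 * norm x ^ L3 \<and> norm (Cc x v) \<le> K6 + K7 * norm x ^ L3"
    using c_bound by blast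
  then have cb: "\<And>x v. norm v \<le> \<rho> \<Longrightarrow> \<bar>c x v\<bar> \<le> K6 + K7 * norm x ^ L3" by blast
  have "\<forall>i. \<exists>C D. C \<ge> 0 \<and> (\<forall>u\<in>admissible_controls T \<rho>. \<forall>y xs. hybrid_trajectory f g T x0 u y xs \<longrightarrow>
            i \<in> {1..T+1} \<longrightarrow> norm (hybrid_init g x0 y xs i) \<le> C * (1 + (\<Sum>m=1..i-1. norm (y m))) ^ D)"
    using init_bound[OF f_lip K1' rho' K2345 gb] by blast
  then obtain Cf where "\<forall>i. \<exists>D. Cf i \<ge> 0 \<and> (\<forall>u\<in>admissible_controls T \<rho>. \<forall>y xs. hybrid_trajectory f g T x0 u y xs \<longrightarrow>
            i \<in> {1..T+1} \<longrightarrow> norm (hybrid_init g x0 y xs i) \<le> Cf i * (1 + (\<Sum>m=1..i-1. norm (y m))) ^ D)"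
    by (rule choice[THEN exE]) 
  then obtain Df where CD: "\<And>i. Cf i \<ge> 0" and
     IB: "\<And>i u y xs. u \<in> admissible_controls T \<rho> \<Longrightarrow> hybrid_trajectory f g T x0 u y xs \<Longrightarrow>
            i \<in> {1..T+1} \<Longrightarrow> norm (hybrid_init g x0 y xs i) \<le> Cf i * (1 + (\<Sum>m=1..i-1. norm (y m))) ^ Df i"
    by (rule choice[THEN exE]) blast
  define A where "A = norm (f 0 0) + K1 * \<rho>"
  have A: "A \<ge> 0" unfolding A_def using K1' rho' by simp
  define Rf where "Rf y i = 1 + (\<Sum>m=1..i-1. norm ((y :: nat \<Rightarrow> 'y) m))" for y i
  have R1: "Rf y i \<ge> 1" for y i unfolding Rf_def by (simp add: sum_nonneg)
  define B where "B i = (if i = T+1 then K6 + K7 * (Cf i) ^ L3 + 1 else K6 + K7 * (exp K1 * (Cf i + A)) ^ L3 + 1)" for i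
  define P where "P i = Df i * L3" for i
  have Bpos: "B i > 0" for i
  proof -
    have "K7 * (Cf i) ^ L3 \<ge> 0" "K7 * (exp K1 * (Cf i + A)) ^ L3 \<ge> 0" using K67 CD[of i] A by simp_all
    then show ?thesis unfolding B_def using K67 by (cases "i = T+1") auto
  qed
  have arc: "\<bar>c (xs i t) (u t)\<bar> \<le> B i * Rf y i ^ P i"
    if u: "u \<in> admissible_controls T \<rho>" and tr: "hybrid_trajectory f g T x0 u y xs"
      and i: "i \<in> {1..T}" and t: "t \<in> {real i - 1..real i}" for u y xs i t
  proof -
    let ?R = "Rf y i"
    define Z where "Z = exp K1 * (Cf i + A)"
    have Z: "Z \<ge> 0" unfolding Z_def using CD A by simp
    have RD: "1 \<le> ?R ^ Df i" using R1 by simp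
    have ib: "norm (hybrid_init g x0 y xs i) \<le> Cf i * ?R ^ Df i" using IB[OF u tr] i unfolding Rf_def by auto
    have "norm (xs i t) \<le> (norm (hybrid_init g x0 y xs i) + A) * exp K1"
      unfolding A_def by (rule arc_bound[OF f_lip K1' rho' u tr i t])
    also have "\<dots> \<le> (Cf i * ?R ^ Df i + A * ?R ^ Df i) * exp K1"
      using ib A RD mult_left_mono[OF RD A] by (intro mult_right_mono add_mono) auto
    also have "\<dots> = Z * ?R ^ Df i" unfolding Z_def by (simp add: algebra_simps)
    finally have xb: "norm (xs i t) \<le> Z * ?R ^ Df i" .
    have "t \<in> {0..real T}" using i t by auto
    then have "norm (u t) \<le> \<rho>" using u unfolding admissible_controls_def by auto
    then have "\<bar>c (xs i t) (u t)\<bar> \<le> K6 + K7 * norm (xs i t) ^ L3" by (rule cb)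
    also have "\<dots> \<le> (K6 + K7 * Z ^ L3 + 1) * (?R ^ Df i) ^ L3"
      by (rule poly_step[OF K67 norm_ge_zero xb Z RD])
    also have "\<dots> = B i * ?R ^ P i" unfolding B_def P_def Z_def using i by (simp add: power_mult)
    finally show ?thesis .
  qed
  have hb: "\<bar>h (g (xs T (real T)) (y T))\<bar> \<le> B (T+1) * Rf y (T+1) ^ P (T+1)"
    if u: "u \<in> admissible_controls T \<rho>" and tr: "hybrid_trajectory f g T x0 u y xs" for u y xs
  proof -
    let ?R = "Rf y (T+1)"
    have RD: "1 \<le> ?R ^ Df (T+1)" using R1 by simp
    have "hybrid_init g x0 y xs (T+1) = g (xs T (real T)) (y T)" unfolding hybrid_init_def using T_pos by simp
    then have ib: "norm (g (xs T (real T)) (y T)) \<le> Cf (T+1) * ?R ^ Df (T+1)"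
      using IB[OF u tr, of "T+1"] unfolding Rf_def by auto
    have "\<bar>h (g (xs T (real T)) (y T))\<bar> \<le> K6 + K7 * norm (g (xs T (real T)) (y T)) ^ L3" by (rule h_bound)
    also have "\<dots> \<le> (K6 + K7 * Cf (T+1) ^ L3 + 1) * (?R ^ Df (T+1)) ^ L3"
      by (rule poly_step[OF K67 norm_ge_zero ib CD RD])
    also have "\<dots> = B (T+1) * ?R ^ P (T+1)" unfolding B_def P_def by (simp add: power_mult)
    finally show ?thesis .
  qed
  show ?thesis
  proof (intro exI[of _ "B 1"] exI[of _ "\<lambda>i. Kset (i - 1) (P i)"]
      exI[of _ "\<lambda>i js. B i * (real (i - 1) + 1) ^ P i"] conjI ballI allI impI)
    show "B 1 > 0" by (rule Bpos)
    fix i assume "i \<in> {2..T+1}"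
    show "finite (Kset (i - 1) (P i))" by (rule Kset_props)
    fix js assume "js \<in> Kset (i - 1) (P i)"
    then show "length js = i - 1" by (rule Kset_props)
    show "B i * (real (i - 1) + 1) ^ P i > 0" using Bpos[of i] by simp
  next
    fix u y xs t
    assume u: "u \<in> admissible_controls T \<rho>" and tr: "hybrid_trajectory f g T x0 u y xs" and t: "t \<in> {0..1::real}"
    have "\<bar>c (xs 1 t) (u t)\<bar> \<le> B 1 * Rf y 1 ^ P 1" using arc[OF u tr, of 1 t] t T_pos by auto
    then show "\<bar>c (xs 1 t) (u t)\<bar> \<le> B 1" unfolding Rf_def by simp
  next
    fix u y xs i t
    assume u: "u \<in> admissible_controls T \<rho>" and tr: "hybrid_trajectory f g T x0 u y xs"
      and i: "i \<in> {2..T}" and t: "t \<in> {real i - 1..real i}"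
    have "\<bar>c (xs i t) (u t)\<bar> \<le> B i * Rf y i ^ P i" using arc[OF u tr _ t] i by auto
    also have "\<dots> \<le> (\<Sum>js\<in>Kset (i - 1) (P i). (B i * (real (i - 1) + 1) ^ P i) *
                    (\<Prod>m=1..i - 1. norm (y m) ^ (js ! (m - 1))))"
      unfolding Rf_def by (rule conv[OF Bpos]) simp
    finally show "\<bar>c (xs i t) (u t)\<bar> \<le> (\<Sum>js\<in>Kset (i - 1) (P i). (B i * (real (i - 1) + 1) ^ P i) *
                    (\<Prod>m=1..i - 1. norm (y m) ^ (js ! (m - 1))))" .
  next
    fix u y xs
    assume u: "u \<in> admissible_controls T \<rho>" and tr: "hybrid_trajectory f g T x0 u y xs"
    have "\<bar>h (g (xs T (real T)) (y T))\<bar> \<le> B (T+1) * Rf y (T+1) ^ P (T+1)" by (rule hb[OF u tr])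
    also have "\<dots> \<le> (\<Sum>js\<in>Kset (T + 1 - 1) (P (T+1)). (B (T+1) * (real (T + 1 - 1) + 1) ^ P (T+1)) *
                    (\<Prod>m=1..T + 1 - 1. norm (y m) ^ (js ! (m - 1))))"
      unfolding Rf_def by (rule conv[OF Bpos]) simp
    finally show "\<bar>h (g (xs T (real T)) (y T))\<bar> \<le> (\<Sum>js\<in>Kset (T + 1 - 1) (P (T+1)). (B (T+1) * (real (T + 1 - 1) + 1) ^ P (T+1)) *
                    (\<Prod>m=1..T. norm (y m) ^ (js ! (m - 1))))" by simp
  qed
qed

end
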